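(* Let $K$ and $L$ be $n$-element finite sets, $M=K\times L$, and let $u=(u_{kl})$ be a unitary matrix indexed by $K\times L$ all of whose entries are nonzero. Let $E\subset F(M)$ be the subspace of functions of the form $f_{kl}=a_k+b_l$ for some functions $a\in F(K)$, $b\in F(L)$ (so $\dim E=2n-1$). Then $I_uf=f$ for every $f\in E$. Consequently the multiplicity of the eigenvalue $1$ in the spectrum of the Berezin transform $I_u$ is at least $2n-1$.
   Context: For a finite set $J$, $F(J)$ denotes the space of complex-valued functions on $J$. For $f=(f_{kl})\in F(M)$, $C_uf$ and $D_uf$ are the operators on $F(K)$ with matrices $x_{kk'}=\sum_{l\in L}u_{kl}f_{kl}\bar u_{k'l}$ and $y_{kk'}=\sum_{l\in L}u_{kl}f_{k'l}\bar u_{k'l}$ respectively; these maps $F(M)\to\operatorname{End}F(K)$ are linear bijections. The Berezin transform is $I_u:=C_u^{-1}D_u:F(M)\to F(M)$; explicitly $(I_uf)_{kl}=\sum_{k'\in K,l'\in L}\frac{u_{kl'}u_{k'l}}{u_{kl}u_{k'l'}}f_{k'l'}|u_{k'l'}|^2$. *)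

theory Defs
  imports "HOL-Analysis.Analysis"
begin

definition unitary_KL :: "complex^'l^'k \<Rightarrow> bool" where
  "unitary_KL u \<longleftrightarrow>
     (\<forall>k k'. (\<Sum>l\<in>UNIV. u$k$l * cnj (u$k'$l)) = (if k = k' then 1 else 0)) \<and>
     (\<forall>l l'. (\<Sum>k\<in>UNIV. cnj (u$k$l) * u$k$l') = (if l = l' then 1 else 0))"

definition berezin :: "complex^'l^'k \<Rightarrow> complex^('k \<times> 'l) \<Rightarrow> complex^('k \<times> 'l)" where
  "berezin u f = (\<chi> m. case m of (k, l) \<Rightarrow> \<Sum>k'\<in>UNIV. \<Sum>l'\<in>UNIV.
      (u$k$l' * u$k'$l) / (u$k$l * u$k'$l') * f$(k', l') * (complex_of_real (cmod (u$k'$l')))\<^sup>2)"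

definition sum_space :: "(complex^('k::finite \<times> 'l::finite)) set" where
  "sum_space = {f. \<exists>a b. \<forall>k l. f$(k, l) = a k + b l}"

end

theory Submission
  imports Defs
begin

lemma indep_coord:
  fixes B :: "(complex^'n::finite) set"
  assumes fin: "finite B" and co: "\<forall>v\<in>B. \<exists>i. \<forall>w\<in>B. w$i = (if w=v then 1 else 0)"
  shows "vec.independent B"
  unfolding vec.independent_explicit
proof (intro conjI allI impI ballI)
  show "finite B" by fact
  fix c v assume s: "(\<Sum>w\<in>B. c w *s w) = 0" and v: "v \<in> B"
  obtain i where i: "\<forall>w\<in>B. w$i = (if w=v then 1 else 0)" using co v by blast
  have "(\<Sum>w\<in>B. c w *s w)$i = (\<Sum>w\<in>B. c w * (w$i))" by (simp add: sum_component)
  also have "\<dots> = (\<Sum>w\<in>B. if w = v then c w else 0)" using i by (intro sum.cong) auto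
  also have "\<dots> = c v" using v fin by simp
  finally show "c v = 0" using s by simp
qed

lemma part1:
  fixes u :: "complex^'l::finite^'k::finite"
  assumes U: "unitary_KL u"
    and nz: "\<forall>k l. u$k$l \<noteq> 0"
    and f: "f \<in> sum_space"
  shows "berezin u f = f"
proof -
  obtain a b where ab: "\<forall>k l. f$(k, l) = a k + b l" using f unfolding sum_space_def by blast
  have U1: "\<And>k k'. (\<Sum>l\<in>UNIV. u$k$l * cnj (u$k'$l)) = (if k = k' then 1 else 0)"
   and U2: "\<And>l l'. (\<Sum>k\<in>UNIV. cnj (u$k$l) * u$k$l') = (if l = l' then 1 else 0)"
    using U unfolding unitary_KL_def by auto
  show ?thesis
  proof (rule vec_eq_iff[THEN iffD2], rule allI)
    fix m :: "'k \<times> 'l"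
    obtain k l where m: "m = (k, l)" by (cases m)
    have nkl: "u$k$l \<noteq> 0" using nz by auto
    have trm: "(u$k$l' * u$k'$l) / (u$k$l * u$k'$l') * f$(k', l') * (complex_of_real (cmod (u$k'$l')))\<^sup>2
        = (a k' * u$k'$l * (u$k$l' * cnj (u$k'$l')) + b l' * u$k$l' * (cnj (u$k'$l') * u$k'$l)) / u$k$l"
      for k' l'
    proof -
      have n2: "u$k'$l' \<noteq> 0" using nz by auto
      have "(complex_of_real (cmod (u$k'$l')))\<^sup>2 = u$k'$l' * cnj (u$k'$l')"
        using complex_norm_square[of "u$k'$l'"] by simp
      then show ?thesis using n2 nkl ab by (simp add: field_simps power2_eq_square)
    qed
    have A: "(\<Sum>k'\<in>UNIV. \<Sum>l'\<in>UNIV. a k' * u$k'$l * (u$k$l' * cnj (u$k'$l'))) = a k * u$k$l"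
    proof -
      have "(\<Sum>k'\<in>UNIV. \<Sum>l'\<in>UNIV. a k' * u$k'$l * (u$k$l' * cnj (u$k'$l')))
          = (\<Sum>k'\<in>UNIV. a k' * u$k'$l * (\<Sum>l'\<in>UNIV. u$k$l' * cnj (u$k'$l')))"
        by (simp add: sum_distrib_left)
      also have "\<dots> = (\<Sum>k'\<in>UNIV. if k = k' then a k' * u$k'$l else 0)" by (intro sum.cong) (simp_all add: U1)
      also have "\<dots> = a k * u$k$l" by simp
      finally show ?thesis .
    qed
    have B: "(\<Sum>k'\<in>UNIV. \<Sum>l'\<in>UNIV. b l' * u$k$l' * (cnj (u$k'$l') * u$k'$l)) = b l * u$k$l"
    proof -
      have "(\<Sum>k'\<in>UNIV. \<Sum>l'\<in>UNIV. b l' * u$k$l' * (cnj (u$k'$l') * u$k'$l))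
          = (\<Sum>l'\<in>UNIV. \<Sum>k'\<in>UNIV. b l' * u$k$l' * (cnj (u$k'$l') * u$k'$l))"
        by (rule sum.swap)
      also have "\<dots> = (\<Sum>l'\<in>UNIV. b l' * u$k$l' * (\<Sum>k'\<in>UNIV. cnj (u$k'$l') * u$k'$l))"
        by (simp add: sum_distrib_left)
      also have "\<dots> = (\<Sum>l'\<in>UNIV. if l' = l then b l' * u$k$l' else 0)" by (intro sum.cong) (simp_all add: U2)
      also have "\<dots> = b l * u$k$l" by simp
      finally show ?thesis .
    qed
    have "berezin u f $ m = (\<Sum>k'\<in>UNIV. \<Sum>l'\<in>UNIV.
      (a k' * u$k'$l * (u$k$l' * cnj (u$k'$l')) + b l' * u$k$l' * (cnj (u$k'$l') * u$k'$l)) / u$k$l)"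
      unfolding berezin_def m using trm by simp
    also have "\<dots> = ((\<Sum>k'\<in>UNIV. \<Sum>l'\<in>UNIV. a k' * u$k'$l * (u$k$l' * cnj (u$k'$l')))
       + (\<Sum>k'\<in>UNIV. \<Sum>l'\<in>UNIV. b l' * u$k$l' * (cnj (u$k'$l') * u$k'$l))) / u$k$l"
      by (simp add: sum_divide_distrib sum.distrib add_divide_distrib)
    also have "\<dots> = a k + b l" using A B nkl by (simp add: field_simps)
    finally show "berezin u f $ m = f $ m" using ab m by simp
  qed
qed

theorem lemma2p5:
  fixes u :: "complex^'l::finite^'k::finite"
  assumes "CARD('k) = CARD('l)"
    and "unitary_KL u"
    and "\<forall>k l. u$k$l \<noteq> 0"
  shows "(\<forall>f\<in>sum_space. berezin u f = f) \<and>
         vec.dim {f :: complex^('k \<times> 'l). berezin u f = f} \<ge> 2 * CARD('k) - 1"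
proof
  show P1: "\<forall>f\<in>sum_space. berezin u f = f" using part1 assms by blast
  define k0 :: 'k where "k0 = undefined"
  define l0 :: 'l where "l0 = undefined"
  define C :: "('k \<times> 'l) set" where "C = ({k0} \<times> UNIV) \<union> (UNIV \<times> {l0})"
  define F :: "'k \<times> 'l \<Rightarrow> complex^('k \<times> 'l)" where
    "F = (\<lambda>(k,l). \<chi> p. case p of (k',l') \<Rightarrow> (if k=k0 \<and> l=l0 then (if k'=k0 then 1 else 0) + (if l'=l0 then 0 else -1)
       else if k = k0 then (if l'=l then 1 else 0) else (if k'=k then 1 else 0)))"
  have Fc: "F c $ c' = (if c = c' then 1 else 0)" if "c \<in> C" "c' \<in> C" for c c'
    using that by (cases c; cases c') (auto simp: F_def C_def)
  have Fs: "F c \<in> sum_space" for c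
  proof (cases c)
    case (Pair k l)
    show ?thesis
    proof (cases "k=k0 \<and> l=l0")
      case True thus ?thesis unfolding sum_space_def F_def Pair
        by (intro CollectI exI[of _ "\<lambda>k'. if k'=k0 then 1 else 0"] exI[of _ "\<lambda>l'. if l'=l0 then 0 else -1"]) auto
    next
      case False
      show ?thesis
      proof (cases "k = k0")
        case True thus ?thesis using False unfolding sum_space_def F_def Pair
          by (intro CollectI exI[of _ "\<lambda>k'. 0"] exI[of _ "\<lambda>l'. if l'=l then 1 else 0"]) auto
      next
        case F2: False thus ?thesis using False unfolding sum_space_def F_def Pair
          by (intro CollectI exI[of _ "\<lambda>k'. if k'=k then 1 else 0"] exI[of _ "\<lambda>l'. 0"]) auto
      qed
    qed
  qed
  have inj: "inj_on F C"
  proof (rule inj_onI)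
    fix x y assume "x \<in> C" "y \<in> C" "F x = F y"
    then have "F x $ x = F y $ x" by simp
    then show "x = y" using Fc \<open>x \<in> C\<close> \<open>y \<in> C\<close> by (simp split: if_splits)
  qed
  have indep: "vec.independent (F ` C)"
  proof (rule indep_coord)
    show "finite (F ` C)" by simp
    show "\<forall>v\<in>F ` C. \<exists>i. \<forall>w\<in>F ` C. w $ i = (if w = v then 1 else 0)"
    proof
      fix v assume "v \<in> F ` C"
      then obtain c where c: "c \<in> C" "v = F c" by blast
      show "\<exists>i. \<forall>w\<in>F ` C. w $ i = (if w = v then 1 else 0)"
      proof (intro exI[of _ c] ballI)
        fix w assume "w \<in> F ` C"
        then obtain d where d: "d \<in> C" "w = F d" by blast
        show "w $ c = (if w = v then 1 else 0)"
          using Fc[OF d(1) c(1)] inj c d by (auto dest: inj_onD)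
      qed
    qed
  qed
  have sub: "F ` C \<subseteq> {f. berezin u f = f}" using P1 Fs by auto
  have cardC: "card C = 2 * CARD('k) - 1"
  proof -
    have i: "({k0} \<times> (UNIV::'l set)) \<inter> (UNIV \<times> {l0}) = {(k0,l0)}" by auto
    have "card C + card {(k0,l0)} = card ({k0} \<times> (UNIV::'l set)) + card ((UNIV::'k set) \<times> {l0})"
      using card_Un_Int[of "{k0} \<times> (UNIV::'l set)" "(UNIV::'k set) \<times> {l0}"] i unfolding C_def by simp
    then show ?thesis using assms(1) by (simp add: card_cartesian_product)
  qed
  have "card (F ` C) = card C" using inj by (simp add: card_image)
  then show "vec.dim {f :: complex^('k \<times> 'l). berezin u f = f} \<ge> 2 * CARD('k) - 1"
    using vec.independent_card_le_dim[OF sub indep] cardC by simp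
qed

end
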